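(* In the setting of the context, let $(h_1',h_2')\in\mathbb C(s)^2$ be a nonzero pair with $\widetilde\gamma_1h_1'+\widetilde\gamma_2h_2'=0$, $(h_1')^{\iota_1}=\pm h_1'$ and $(h_2')^{\iota_2}=\pm h_2'$. If $(h_1')^{\iota_1}=h_1'$ or $(h_2')^{\iota_2}=h_2'$, then the only pair $(h_1,h_2)\in\mathbb C(s)^2$ with $\widetilde\gamma_1h_1+\widetilde\gamma_2h_2=0$, $h_1^{\iota_1}=-h_1$ and $h_2^{\iota_2}=-h_2$ is $(0,0)$.
   Context: For a genus-zero weighted quadrant walk model (step set one of the five genus-zero sets, step weights $d_{i,j}>0$, Boltzmann weights $a,b>0$), $A=1-1/a$, $B=1-1/b$; $s\mapsto(x(s),y(s))$ is a fixed rational parametrization by $\mathbb P^1$ of the kernel curve (for a fixed real $t$ transcendental over $\mathbb Q((d_{i,j}),a,b)$), with $x(1/s)=x(s)$, $y(q/s)=y(s)$ for a fixed real $q$ not a root of unity. $\iota_1(s)=1/s$, $\iota_2(s)=q/s$, $\sigma=\iota_2\circ\iota_1$, $h^\tau=h\circ\tau$. It is known that the only elements of $\mathbb C(s)$ fixed by both $\iota_1$ and $\iota_2$ (equivalently by $\sigma$) are the constants. $\widetilde\gamma_1=A/x(s)-td_{1,-1}/y(s)$, $\widetilde\gamma_2=B/y(s)-td_{-1,1}/x(s)$. *)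

theory Defs
  imports "HOL-Computational_Algebra.Polynomial" "HOL-Computational_Algebra.Fraction_Field"
begin

type_synonym ratfun = "complex poly fract"

definition rf_const :: "complex \<Rightarrow> ratfun" where
  "rf_const c = Fract [:c:] 1"

definition rf_real :: "real \<Rightarrow> ratfun" where
  "rf_real r = rf_const (complex_of_real r)"

text \<open>For a polynomial p of degree n: s^n * p(c/s), a polynomial in s.\<close>
definition poly_inv_sub :: "complex \<Rightarrow> complex poly \<Rightarrow> complex poly" where
  "poly_inv_sub c p = (\<Sum>i\<le>degree p. monom (coeff p i * c ^ i) (degree p - i))"

text \<open>Substitution s := c/s in a rational function: for f = p/r,
  f(c/s) = p(c/s)/r(c/s) = (s^deg r * s^deg p p(c/s)) / (s^deg p * s^deg r r(c/s)).
  The value does not depend on the chosen representative.\<close>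
definition rf_inv_sub :: "complex \<Rightarrow> ratfun \<Rightarrow> ratfun" where
  "rf_inv_sub c f =
     (let (p, r) = (SOME (p, r). r \<noteq> 0 \<and> f = Fract p r)
      in Fract (poly_inv_sub c p * [:0, 1:] ^ degree r)
               (poly_inv_sub c r * [:0, 1:] ^ degree p))"

definition iota1 :: "ratfun \<Rightarrow> ratfun" where
  "iota1 h = rf_inv_sub 1 h"

definition iota2 :: "real \<Rightarrow> ratfun \<Rightarrow> ratfun" where
  "iota2 q h = rf_inv_sub (complex_of_real q) h"

text \<open>The genus-zero step sets: NW and SE steps plus a nonempty subset of {N, E, NE}
  (the five genus-zero models, counted up to the symmetry x <-> y).\<close>
definition genus_zero_step_sets :: "(int \<times> int) set set" where
  "genus_zero_step_sets =
     {insert (-1, 1) (insert (1, -1) T) | T. T \<subseteq> {(0, 1), (1, 0), (1, 1)} \<and> T \<noteq> {}}"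

inductive_set base_field :: "(int \<Rightarrow> int \<Rightarrow> real) \<Rightarrow> real \<Rightarrow> real \<Rightarrow> real set"
  for d :: "int \<Rightarrow> int \<Rightarrow> real" and a b :: real where
  bf_rat: "r \<in> \<rat> \<Longrightarrow> r \<in> base_field d a b"
| bf_d: "d i j \<in> base_field d a b"
| bf_a: "a \<in> base_field d a b"
| bf_b: "b \<in> base_field d a b"
| bf_add: "u \<in> base_field d a b \<Longrightarrow> v \<in> base_field d a b \<Longrightarrow> u + v \<in> base_field d a b"
| bf_mult: "u \<in> base_field d a b \<Longrightarrow> v \<in> base_field d a b \<Longrightarrow> u * v \<in> base_field d a b"
| bf_uminus: "u \<in> base_field d a b \<Longrightarrow> - u \<in> base_field d a b"
| bf_inverse: "u \<in> base_field d a b \<Longrightarrow> inverse u \<in> base_field d a b"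

definition transcendental_over :: "real set \<Rightarrow> real \<Rightarrow> bool" where
  "transcendental_over F t \<longleftrightarrow>
     (\<forall>p :: real poly. p \<noteq> 0 \<and> (\<forall>i. coeff p i \<in> F) \<longrightarrow> poly p t \<noteq> 0)"

definition gamma1 :: "(int \<Rightarrow> int \<Rightarrow> real) \<Rightarrow> real \<Rightarrow> real \<Rightarrow> ratfun \<Rightarrow> ratfun \<Rightarrow> ratfun" where
  "gamma1 d a t x y = rf_real (1 - 1 / a) / x - rf_real (t * d 1 (-1)) / y"

definition gamma2 :: "(int \<Rightarrow> int \<Rightarrow> real) \<Rightarrow> real \<Rightarrow> real \<Rightarrow> ratfun \<Rightarrow> ratfun \<Rightarrow> ratfun" where
  "gamma2 d b t x y = rf_real (1 - 1 / b) / y - rf_real (t * d (-1) 1) / x"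

end

theory Submission
  imports Defs
begin

lemma inv_reflect:
  assumes "c \<noteq> 0"
  shows "poly_inv_sub c p = reflect_poly (pcompose p [:0, c:])"
proof (rule poly_eqI)
  fix n
  let ?d = "degree p"
  have dg: "degree (pcompose p [:0, c:]) = ?d" using assms by (simp add: degree_pcompose)
  have "coeff (poly_inv_sub c p) n = (\<Sum>i\<le>?d. if ?d - i = n then coeff p i * c ^ i else 0)"
    unfolding poly_inv_sub_def by (simp add: coeff_sum coeff_monom)
  also have "\<dots> = (if n \<le> ?d then coeff p (?d - n) * c ^ (?d - n) else 0)"
  proof (cases "n \<le> ?d")
    case True
    have "(\<Sum>i\<le>?d. if ?d - i = n then coeff p i * c ^ i else 0)
        = (\<Sum>i\<le>?d. if i = ?d - n then coeff p i * c ^ i else 0)"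
      by (rule sum.cong) (use True in auto)
    also have "\<dots> = coeff p (?d - n) * c ^ (?d - n)" using True by simp
    finally show ?thesis using True by simp
  next
    case False
    then show ?thesis by (simp, intro sum.neutral) auto
  qed
  also have "\<dots> = coeff (reflect_poly (pcompose p [:0, c:])) n"
    by (simp add: coeff_reflect_poly dg coeff_pcompose_linear mult.commute not_less)
  finally show "coeff (poly_inv_sub c p) n = coeff (reflect_poly (pcompose p [:0, c:])) n" .
qed

lemma inv_mult: "c \<noteq> 0 \<Longrightarrow> poly_inv_sub c (p * q) = poly_inv_sub c p * poly_inv_sub c q"
  by (simp add: inv_reflect pcompose_mult reflect_poly_mult)

lemma inv_eq0: "c \<noteq> 0 \<Longrightarrow> poly_inv_sub c p = 0 \<longleftrightarrow> p = 0"
  by (simp add: inv_reflect pcompose_eq_0_iff)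

lemma inv_const: "c \<noteq> 0 \<Longrightarrow> poly_inv_sub c [:e:] = [:e:]"
  by (simp add: inv_reflect)

lemma rf_inv_sub_Fract:
  assumes c: "c \<noteq> 0" and r: "r \<noteq> 0"
  shows "rf_inv_sub c (Fract p r) =
    Fract (poly_inv_sub c p * [:0, 1:] ^ degree r) (poly_inv_sub c r * [:0, 1:] ^ degree p)"
proof -
  define P where "P = (\<lambda>pr :: complex poly \<times> complex poly. snd pr \<noteq> 0 \<and> Fract p r = Fract (fst pr) (snd pr))"
  have ex: "\<exists>pr. P pr" using r unfolding P_def by (intro exI[of _ "(p, r)"]) simp
  obtain p0 r0 where pr0: "(SOME (p', r'). r' \<noteq> 0 \<and> Fract p r = Fract p' r') = (p0, r0)"
    by (metis surj_pair)
  have "P (SOME pr. P pr)" using ex by (rule someI_ex)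
  moreover have "(SOME pr. P pr) = (p0, r0)" using pr0 unfolding P_def
    by (simp add: case_prod_beta')
  ultimately have r0: "r0 \<noteq> 0" and eq: "Fract p r = Fract p0 r0" unfolding P_def by auto
  have cross: "p * r0 = p0 * r" using eq r r0 by (simp add: eq_fract)
  have lhs: "rf_inv_sub c (Fract p r) =
    Fract (poly_inv_sub c p0 * [:0, 1:] ^ degree r0) (poly_inv_sub c r0 * [:0, 1:] ^ degree p0)"
    unfolding rf_inv_sub_def pr0 by simp
  show ?thesis
  proof (cases "p = 0")
    case True
    then have "p0 = 0" using cross r by simp
    then show ?thesis using True lhs by (simp add: inv_reflect c eq_fract)
  next
    case False
    then have p0: "p0 \<noteq> 0" using cross r r0 by auto
    have dd: "degree p + degree r0 = degree p0 + degree r"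
      using cross False p0 r r0 by (metis degree_mult_eq)
    have ii: "poly_inv_sub c p * poly_inv_sub c r0 = poly_inv_sub c p0 * poly_inv_sub c r"
      using cross c by (metis inv_mult)
    have nz1: "poly_inv_sub c r * [:0, 1:] ^ degree p \<noteq> 0" using r c by (simp add: inv_eq0)
    have nz2: "poly_inv_sub c r0 * [:0, 1:] ^ degree p0 \<noteq> 0" using r0 c by (simp add: inv_eq0)
    have "poly_inv_sub c p0 * [:0, 1:] ^ degree r0 * (poly_inv_sub c r * [:0, 1:] ^ degree p)
        = (poly_inv_sub c p0 * poly_inv_sub c r) * [:0, 1:] ^ (degree r0 + degree p)"
      by (simp add: power_add mult_ac)
    also have "\<dots> = (poly_inv_sub c p * poly_inv_sub c r0) * [:0, 1:] ^ (degree r + degree p0)"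
      using ii dd by (simp add: add.commute)
    also have "\<dots> = poly_inv_sub c p * [:0, 1:] ^ degree r * (poly_inv_sub c r0 * [:0, 1:] ^ degree p0)"
      by (simp add: power_add mult_ac)
    finally show ?thesis unfolding lhs using nz1 nz2 by (simp add: eq_fract)
  qed
qed

lemma rf_inv_sub_mult:
  assumes c: "c \<noteq> 0"
  shows "rf_inv_sub c (f * g) = rf_inv_sub c f * rf_inv_sub c g"
proof -
  obtain p r where f: "f = Fract p r" "r \<noteq> 0" by (cases f)
  obtain p' r' where g: "g = Fract p' r'" "r' \<noteq> 0" by (cases g)
  show ?thesis
  proof (cases "p = 0 \<or> p' = 0")
    case True
    then show ?thesis using f g c by (auto simp: rf_inv_sub_Fract inv_reflect eq_fract)
  next
    case False
    then show ?thesis using f g c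
      by (simp add: rf_inv_sub_Fract inv_mult degree_mult_eq power_add mult_ac)
  qed
qed

lemma rf_inv_sub_const: "c \<noteq> 0 \<Longrightarrow> rf_inv_sub c (rf_const e) = rf_const e"
  by (simp add: rf_const_def rf_inv_sub_Fract inv_const inv_reflect one_pCons)

lemma rf_const_add: "rf_const (a + b) = rf_const a + rf_const b"
  by (simp add: rf_const_def)
lemma rf_const_mult: "rf_const (a * b) = rf_const a * rf_const b"
  by (simp add: rf_const_def mult.commute)
lemma rf_const_minus: "rf_const (- a) = - rf_const a"
  by (simp add: rf_const_def)
lemma rf_const_diff: "rf_const (a - b) = rf_const a - rf_const b"
  by (simp add: rf_const_def)
lemma rf_const_0: "rf_const 0 = 0"
  by (simp add: rf_const_def fract_collapse)
lemma rf_const_1: "rf_const 1 = 1"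
  unfolding rf_const_def by (metis One_fract_def one_pCons)
lemma rf_const_inj: "rf_const a = rf_const b \<longleftrightarrow> a = b"
  by (simp add: rf_const_def eq_fract)
lemma rf_const_eq0: "rf_const a = 0 \<longleftrightarrow> a = 0"
  using rf_const_inj[of a 0] by (simp add: rf_const_0)
lemma rf_const_power: "rf_const (a ^ n) = rf_const a ^ n"
  by (induct n) (simp_all add: rf_const_1 rf_const_mult)

lemmas rf_real_defs = rf_real_def
lemma rf_real_add: "rf_real (a + b) = rf_real a + rf_real b"
  by (simp add: rf_real_def rf_const_add)
lemma rf_real_mult: "rf_real (a * b) = rf_real a * rf_real b"
  by (simp add: rf_real_def rf_const_mult)
lemma rf_real_minus: "rf_real (- a) = - rf_real a"
  by (simp add: rf_real_def rf_const_minus)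
lemma rf_real_diff: "rf_real (a - b) = rf_real a - rf_real b"
  by (simp add: rf_real_def rf_const_diff)
lemma rf_real_power: "rf_real (a ^ n) = rf_real a ^ n"
  by (simp add: rf_real_def rf_const_power)
lemma rf_real_inj: "rf_real a = rf_real b \<longleftrightarrow> a = b"
  by (simp add: rf_real_def rf_const_inj)
lemma rf_real_eq0: "rf_real a = 0 \<longleftrightarrow> a = 0"
  by (simp add: rf_real_def rf_const_eq0)
lemma rf_real_0: "rf_real 0 = 0"
  by (simp add: rf_real_def rf_const_0)

lemma quad_const:
  fixes x :: ratfun and \<delta> \<beta> \<gamma> :: complex
  assumes nz: "\<delta> \<noteq> 0 \<or> \<beta> \<noteq> 0"
    and eq: "rf_const \<delta> * x ^ 2 + rf_const \<beta> * x + rf_const \<gamma> = 0"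
  shows "x \<in> range rf_const"
proof (cases "\<delta> = 0")
  case True
  then have b: "\<beta> \<noteq> 0" using nz by simp
  have "rf_const \<beta> * x = - rf_const \<gamma>" using eq True
    by (simp add: rf_const_0 add_eq_0_iff2)
  have bb: "rf_const \<beta> \<noteq> 0" using b by (simp add: rf_const_eq0)
  have dv: "rf_const (- \<gamma> / \<beta>) * rf_const \<beta> = - rf_const \<gamma>"
    using b by (simp add: rf_const_mult[symmetric] rf_const_minus[symmetric])
  have "x = rf_const (- \<gamma> / \<beta>)"
    using bb dv \<open>rf_const \<beta> * x = - rf_const \<gamma>\<close>
    by (metis mult.commute mult_right_cancel)
  then show ?thesis by blast
next
  case False
  define s where "s = csqrt (\<beta>^2 - 4 * \<delta> * \<gamma>)"
  define r1 where "r1 = (- \<beta> + s) / (2 * \<delta>)"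
  define r2 where "r2 = (- \<beta> - s) / (2 * \<delta>)"
  have s2: "s^2 = \<beta>^2 - 4 * \<delta> * \<gamma>" unfolding s_def by simp
  have e1: "- (\<delta> * (r1 + r2)) = \<beta>" unfolding r1_def r2_def using False by (simp add: field_simps)
  have e2: "\<delta> * (r1 * r2) = \<gamma>" unfolding r1_def r2_def using False s2
    by (simp add: field_simps power2_eq_square) algebra
  have "rf_const \<delta> * ((x - rf_const r1) * (x - rf_const r2))
     = rf_const \<delta> * x ^ 2 + rf_const (- (\<delta> * (r1 + r2))) * x + rf_const (\<delta> * (r1 * r2))"
    by (simp add: rf_const_minus rf_const_mult rf_const_add rf_const_diff algebra_simps power2_eq_square)
  also have "\<dots> = 0" using eq e1 e2 by simp
  finally have "(x - rf_const r1) * (x - rf_const r2) = 0" using False by (simp add: rf_const_eq0)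
  then have "x = rf_const r1 \<or> x = rf_const r2" by simp
  then show ?thesis by blast
qed

lemma transc_nonzero:
  assumes tr: "transcendental_over F t"
    and p: "p \<noteq> 0" "\<forall>i. coeff p i \<in> F"
  shows "poly p t \<noteq> 0"
  using assms unfolding transcendental_over_def by blast

lemma bf_0: "0 \<in> base_field d a b" by (rule bf_rat) simp
lemma bf_1: "1 \<in> base_field d a b" by (rule bf_rat) simp

lemma t_nonzero:
  assumes "transcendental_over (base_field d a b) t" shows "t \<noteq> 0"
proof -
  have "poly [:0, 1:] t \<noteq> 0"
    by (rule transc_nonzero[OF assms]) (auto simp: coeff_pCons bf_0 bf_1 split: nat.splits)
  then show ?thesis by simp
qed

lemma bf_A: "1 - 1 / u \<in> base_field d a b" if "u \<in> base_field d a b" for u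
proof -
  have "1 - 1 / u = 1 + - inverse u" by (simp add: divide_inverse)
  then show ?thesis using that by (metis bf_1 bf_add bf_uminus bf_inverse)
qed

lemma transc_quad:
  assumes tr: "transcendental_over (base_field d a b) t"
    and A: "A \<in> base_field d a b" and D1: "D1 \<in> base_field d a b" and D2: "D2 \<in> base_field d a b"
    and nz: "D1 * D2 \<noteq> 0"
    and eq: "A - A^2 = D1 * D2 * t^2"
  shows False
proof -
  let ?p = "[:A - A^2, 0, - (D1 * D2):]"
  have c: "\<forall>i. coeff ?p i \<in> base_field d a b"
  proof
    fix i
    have "A - A^2 \<in> base_field d a b"
      using A by (simp add: power2_eq_square) (metis bf_add bf_mult bf_uminus diff_conv_add_uminus)
    moreover have "- (D1 * D2) \<in> base_field d a b" using D1 D2 by (metis bf_mult bf_uminus)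
    ultimately show "coeff ?p i \<in> base_field d a b"
      by (auto simp: coeff_pCons bf_0 split: nat.splits)
  qed
  have "?p \<noteq> 0" using nz by simp
  from transc_nonzero[OF tr this c] have "poly ?p t \<noteq> 0" .
  moreover have "poly ?p t = 0" using eq by (simp add: algebra_simps power2_eq_square)
  ultimately show False by simp
qed

lemma gam_nz:
  fixes X Y :: ratfun and A D1 D2 E F G t :: real
  assumes kern: "X * Y = rf_real t * (rf_real D2 * Y^2 + rf_real D1 * X^2
                  + X * Y * (rf_real E * Y + rf_real F * X + rf_real G * X * Y))"
    and D1: "D1 > 0" and D2: "D2 > 0" and t: "t \<noteq> 0"
    and nonconst: "X \<notin> range rf_const \<or> Y \<notin> range rf_const"
    and g: "rf_real A / X - rf_real (t * D1) / Y = 0"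
  shows "A - A^2 = D1 * D2 * t^2"
proof -
  have tD1: "rf_real t * rf_real D1 \<noteq> 0" "rf_real t * rf_real D2 \<noteq> 0"
    using t D1 D2 by (simp_all add: rf_real_eq0)
  have X: "X \<noteq> 0"
  proof
    assume X0: "X = 0"
    then have "rf_real t * rf_real D2 * Y^2 = 0" using kern by (simp add: algebra_simps)
    then have "Y = 0" using tD1 by simp
    then show False using X0 nonconst rf_const_0 by (metis rangeI)
  qed
  have Y: "Y \<noteq> 0"
  proof
    assume Y0: "Y = 0"
    then have "rf_real t * rf_real D1 * X^2 = 0" using kern by (simp add: algebra_simps)
    then have "X = 0" using tD1 by simp
    then show False using X by simp
  qed
  have g2: "rf_real A * Y = rf_real (t * D1) * X" using g X Y by (simp add: field_simps)
  have A: "A \<noteq> 0"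
  proof
    assume "A = 0"
    then have "rf_real t * rf_real D1 * X = 0" using g2 by (simp add: rf_real_0 rf_real_mult)
    then show False using tD1 X by simp
  qed
  define k where "k = t * D1 / A"
  have Yk: "Y = rf_real k * X"
  proof -
    have "rf_real A * Y = rf_real A * (rf_real k * X)"
      using g2 A unfolding k_def by (simp add: rf_real_mult[symmetric])
    then show ?thesis using A by (simp add: rf_real_eq0)
  qed
  define \<delta> where "\<delta> = t * G * k^2"
  define \<beta> where "\<beta> = t * (E * k^2 + F * k)"
  define \<gamma> where "\<gamma> = t * (D2 * k^2 + D1) - k"
  have "X^2 * (rf_real \<delta> * X ^ 2 + rf_real \<beta> * X + rf_real \<gamma>) = 0"
  proof -
    have "X^2 * (rf_real \<delta> * X ^ 2 + rf_real \<beta> * X + rf_real \<gamma>) =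
      rf_real t * (rf_real D2 * Y^2 + rf_real D1 * X^2
                  + X * Y * (rf_real E * Y + rf_real F * X + rf_real G * X * Y)) - X * Y"
      unfolding Yk \<delta>_def \<beta>_def \<gamma>_def
      by (simp add: rf_real_mult rf_real_add rf_real_diff rf_real_power) algebra
    then show ?thesis using kern by simp
  qed
  then have eq: "rf_real \<delta> * X ^ 2 + rf_real \<beta> * X + rf_real \<gamma> = 0" using X by simp
  have "\<delta> = 0 \<and> \<beta> = 0"
  proof (rule ccontr)
    assume "\<not> (\<delta> = 0 \<and> \<beta> = 0)"
    then have "of_real \<delta> \<noteq> (0::complex) \<or> of_real \<beta> \<noteq> (0::complex)" by simp
    from quad_const[OF this] eq have "X \<in> range rf_const" by (simp add: rf_real_def)
    then obtain e where "X = rf_const e" by blast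
    then have "Y = rf_const (of_real k * e)" using Yk by (simp add: rf_real_def rf_const_mult)
    then show False using nonconst \<open>X = rf_const e\<close> by blast
  qed
  then have "\<gamma> = 0" using eq by (simp add: rf_real_0 rf_real_eq0)
  then have "k = t * (D2 * k^2 + D1)" unfolding \<gamma>_def by simp
  then have "A * (D1 * t) = A * (A * (D1 * t)) + D1 * (D1 * (D2 * (t * (t * t))))"
    using A t D1 unfolding k_def by (simp add: field_simps power2_eq_square)
  then have "(D1 * t) * (A - A^2 - D1 * D2 * t^2) = 0"
    by (simp add: algebra_simps power2_eq_square)
  then show ?thesis using t D1 by simp
qed

theorem lemma3p3:
  fixes S :: "(int \<times> int) set" and d :: "int \<Rightarrow> int \<Rightarrow> real"
    and a b t q :: real and x y h1' h2' :: ratfun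
  assumes steps: "S \<in> genus_zero_step_sets"
    and weights_pos: "\<forall>(i, j) \<in> S. d i j > 0"
    and weights_zero: "\<forall>i j. (i, j) \<notin> S \<longrightarrow> d i j = 0"
    and a_pos: "a > 0" and b_pos: "b > 0"
    and t_transc: "transcendental_over (base_field d a b) t"
    and q_nonzero: "q \<noteq> 0"
    and q_not_root_of_unity: "\<forall>n::nat. n > 0 \<longrightarrow> q ^ n \<noteq> 1"
    and kernel: "x * y = rf_real t * (\<Sum>(i, j) \<in> S. rf_real (d i j) * x ^ nat (i + 1) * y ^ nat (j + 1))"
    and nonconst: "x \<notin> range rf_const \<or> y \<notin> range rf_const"
    and x_inv: "iota1 x = x"
    and y_inv: "iota2 q y = y"
    and fixed_const: "\<forall>f. iota1 f = f \<and> iota2 q f = f \<longrightarrow> f \<in> range rf_const"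
    and h'_nonzero: "(h1', h2') \<noteq> (0, 0)"
    and h'_eq: "gamma1 d a t x y * h1' + gamma2 d b t x y * h2' = 0"
    and h1'_sym: "iota1 h1' = h1' \<or> iota1 h1' = - h1'"
    and h2'_sym: "iota2 q h2' = h2' \<or> iota2 q h2' = - h2'"
    and h'_even: "iota1 h1' = h1' \<or> iota2 q h2' = h2'"
  shows "\<forall>h1 h2. gamma1 d a t x y * h1 + gamma2 d b t x y * h2 = 0
                 \<and> iota1 h1 = - h1 \<and> iota2 q h2 = - h2
                 \<longrightarrow> (h1, h2) = (0, 0)"
proof (intro allI impI)
  fix h1 h2
  assume H: "gamma1 d a t x y * h1 + gamma2 d b t x y * h2 = 0
                 \<and> iota1 h1 = - h1 \<and> iota2 q h2 = - h2"
  obtain T where T: "S = insert (-1, 1) (insert (1, -1) T)" "T \<subseteq> {(0, 1), (1, 0), (1, 1)}"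
    using steps unfolding genus_zero_step_sets_def by blast
  define U :: "(int \<times> int) set" where "U = {(-1, 1), (1, -1), (0, 1), (1, 0), (1, 1)}"
  have SU: "S \<subseteq> U" using T unfolding U_def by auto
  have d1: "d 1 (-1) > 0" and d2: "d (-1) 1 > 0" using weights_pos T by auto
  have d0: "d i j \<ge> 0" for i j using weights_pos weights_zero
    by (cases "(i, j) \<in> S") (auto intro: less_imp_le)
  let ?F = "\<lambda>(i, j). rf_real (d i j) * x ^ nat (i + 1) * y ^ nat (j + 1)"
  have "(\<Sum>(i, j) \<in> S. rf_real (d i j) * x ^ nat (i + 1) * y ^ nat (j + 1)) = sum ?F U"
    by (rule sum.mono_neutral_left) (use SU weights_zero in \<open>auto simp: U_def rf_real_0\<close>)
  also have "\<dots> = rf_real (d (-1) 1) * y^2 + rf_real (d 1 (-1)) * x^2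
       + x * y * (rf_real (d 0 1) * y + rf_real (d 1 0) * x + rf_real (d 1 1) * x * y)"
    unfolding U_def by (simp add: algebra_simps power2_eq_square eval_nat_numeral)
  finally have kern: "x * y = rf_real t * (rf_real (d (-1) 1) * y^2 + rf_real (d 1 (-1)) * x^2
       + x * y * (rf_real (d 0 1) * y + rf_real (d 1 0) * x + rf_real (d 1 1) * x * y))"
    using kernel by simp
  have t0: "t \<noteq> 0" using t_transc by (rule t_nonzero)
  have bfd: "d i j \<in> base_field d a b" for i j by (rule bf_d)
  have g1: "gamma1 d a t x y \<noteq> 0"
  proof
    assume "gamma1 d a t x y = 0"
    then have "rf_real (1 - 1 / a) / x - rf_real (t * d 1 (-1)) / y = 0" unfolding gamma1_def .
    from gam_nz[OF kern d1 d2 t0 nonconst this]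
    show False using transc_quad[OF t_transc bf_A[OF bf_a] bfd[of 1 "-1"] bfd[of "-1" 1]] d1 d2 by simp
  qed
  have kern2: "y * x = rf_real t * (rf_real (d 1 (-1)) * x^2 + rf_real (d (-1) 1) * y^2
       + y * x * (rf_real (d 1 0) * x + rf_real (d 0 1) * y + rf_real (d 1 1) * y * x))"
  proof -
    have "rf_real t * (rf_real (d 1 (-1)) * x^2 + rf_real (d (-1) 1) * y^2
       + y * x * (rf_real (d 1 0) * x + rf_real (d 0 1) * y + rf_real (d 1 1) * y * x))
      = rf_real t * (rf_real (d (-1) 1) * y^2 + rf_real (d 1 (-1)) * x^2
       + x * y * (rf_real (d 0 1) * y + rf_real (d 1 0) * x + rf_real (d 1 1) * x * y))"
      by algebra
    then show ?thesis using kern by (metis mult.commute)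
  qed
  have nonconst2: "y \<notin> range rf_const \<or> x \<notin> range rf_const" using nonconst by blast
  have g2: "gamma2 d b t x y \<noteq> 0"
  proof
    assume "gamma2 d b t x y = 0"
    then have "rf_real (1 - 1 / b) / y - rf_real (t * d (-1) 1) / x = 0" unfolding gamma2_def .
    from gam_nz[OF kern2 d2 d1 t0 nonconst2 this]
    show False using transc_quad[OF t_transc bf_A[OF bf_b] bfd[of "-1" 1] bfd[of 1 "-1"]] d1 d2 by simp
  qed
  let ?g1 = "gamma1 d a t x y" and ?g2 = "gamma2 d b t x y"
  have h1'0: "h1' \<noteq> 0"
  proof
    assume "h1' = 0"
    then have "?g2 * h2' = 0" using h'_eq by simp
    then have "h2' = 0" using g2 by simp
    then show False using h'_nonzero \<open>h1' = 0\<close> by simp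
  qed
  have h2'0: "h2' \<noteq> 0"
  proof
    assume "h2' = 0"
    then have "?g1 * h1' = 0" using h'_eq by simp
    then have "h1' = 0" using g1 by simp
    then show False using h1'0 by simp
  qed
  have "?g1 * (h1 * h2' - h2 * h1') = 0"
  proof -
    have e1: "?g1 * h1 = - (?g2 * h2)" using H by (simp add: eq_neg_iff_add_eq_0)
    have e2: "?g1 * h1' = - (?g2 * h2')" using h'_eq by (simp add: eq_neg_iff_add_eq_0)
    have "?g1 * (h1 * h2' - h2 * h1') = (?g1 * h1) * h2' - (?g1 * h1') * h2"
      by (simp add: algebra_simps)
    also have "\<dots> = 0" unfolding e1 e2 by (simp add: algebra_simps)
    finally show ?thesis .
  qed
  then have cross: "h1 * h2' = h2 * h1'" using g1 by simp
  define f where "f = h1 / h1'"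
  have h1f: "h1 = f * h1'" unfolding f_def using h1'0 by simp
  have h2f: "h2 = f * h2'"
  proof -
    have "h2 * h1' = f * h2' * h1'" using cross h1f by (metis mult.commute mult.left_commute)
    then show ?thesis using h1'0 by (metis mult_right_cancel)
  qed
  have c1: "(1::complex) \<noteq> 0" by simp
  have c2: "complex_of_real q \<noteq> 0" using q_nonzero by simp
  have m1: "iota1 (u * v) = iota1 u * iota1 v" for u v
    unfolding iota1_def by (rule rf_inv_sub_mult[OF c1])
  have m2: "iota2 q (u * v) = iota2 q u * iota2 q v" for u v
    unfolding iota2_def by (rule rf_inv_sub_mult[OF c2])
  have k1: "iota1 (rf_const e) = rf_const e" for e
    unfolding iota1_def by (rule rf_inv_sub_const[OF c1])
  have k2: "iota2 q (rf_const e) = rf_const e" for e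
    unfolding iota2_def by (rule rf_inv_sub_const[OF c2])
  have i1: "iota1 f * iota1 h1' = - f * h1'" using H m1[of f h1'] h1f by simp
  have i2: "iota2 q f * iota2 q h2' = - f * h2'" using H m2[of f h2'] h2f by simp
  have f1c: "iota1 h1' = h1' \<Longrightarrow> iota1 f = - f"
  proof -
    assume "iota1 h1' = h1'"
    then have "iota1 f * h1' = (- f) * h1'" using i1 by simp
    then show ?thesis using h1'0 by (metis mult_right_cancel)
  qed
  have f1d: "iota1 h1' = - h1' \<Longrightarrow> iota1 f = f"
  proof -
    assume "iota1 h1' = - h1'"
    then have "iota1 f * h1' = f * h1'" using i1 by simp
    then show ?thesis using h1'0 by (metis mult_right_cancel)
  qed
  have f2c: "iota2 q h2' = h2' \<Longrightarrow> iota2 q f = - f"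
  proof -
    assume "iota2 q h2' = h2'"
    then have "iota2 q f * h2' = (- f) * h2'" using i2 by simp
    then show ?thesis using h2'0 by (metis mult_right_cancel)
  qed
  have f2d: "iota2 q h2' = - h2' \<Longrightarrow> iota2 q f = f"
  proof -
    assume "iota2 q h2' = - h2'"
    then have "iota2 q f * h2' = f * h2'" using i2 by simp
    then show ?thesis using h2'0 by (metis mult_right_cancel)
  qed
  have f1: "iota1 f = f \<or> iota1 f = - f" using h1'_sym f1c f1d by blast
  have f2: "iota2 q f = f \<or> iota2 q f = - f" using h2'_sym f2c f2d by blast
  note f1' = f1c and f2' = f2c
  have "iota1 (f * f) = f * f \<and> iota2 q (f * f) = f * f"
    using f1 f2 m1[of f f] m2[of f f] by auto
  then obtain c where "f * f = rf_const c" using fixed_const by blast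
  define e where "e = csqrt c"
  have "(f - rf_const e) * (f + rf_const e) = f * f - rf_const (e * e)"
    by (simp add: rf_const_mult algebra_simps)
  also have "e * e = c" unfolding e_def by (metis power2_csqrt power2_eq_square)
  finally have "(f - rf_const e) * (f + rf_const e) = 0" using \<open>f * f = rf_const c\<close> by simp
  then have "f = rf_const e \<or> f = rf_const (- e)" by (auto simp: rf_const_minus eq_neg_iff_add_eq_0)
  then obtain e' where fe: "f = rf_const e'" by blast
  have "f = - f" using h'_even f1' f2' k1 k2 fe by metis
  then have "rf_const e' = rf_const (- e')" using fe by (simp add: rf_const_minus)
  then have "e' = 0" by (simp add: rf_const_inj)
  then have "f = 0" using fe by (simp add: rf_const_0)
  then show "(h1, h2) = (0, 0)" using h1f h2f by simp
qed

end
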